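(* The string rewriting system $T=D_T\cup A\cup B$ is terminating if and only if the Collatz conjecture holds, i.e. if and only if for every $n\in\mathbb{N}^+$ there is $k\in\mathbb{N}$ with $C^k(n)=1$ (equivalently, every trajectory of the map $\tau(n)=n/2$ for even $n$, $\tau(n)=(3n+1)/2$ for odd $n$, on $\mathbb{N}^+$ contains $1$).
   Context: $C:\mathbb{N}^+\to\mathbb{N}^+$ is the Collatz function $C(n)=n/2$ for $n$ even, $C(n)=3n+1$ for $n$ odd; $C^k$ is the $k$-fold iterate. A string rewriting system $R$ induces $u\ell v\to_R urv$ for each rule $\ell\to r$; it is terminating if there is no infinite rewrite sequence. Alphabet $\{0_2,1_2,0_3,1_3,2_3,\lhd,\rhd\}$. $D_T=\{0_2\rhd\to\rhd,\ 1_2\rhd\to 2_3\rhd\}$; $A=\{0_20_3\to0_30_2,\ 0_21_3\to0_31_2,\ 0_22_3\to1_30_2,\ 1_20_3\to1_31_2,\ 1_21_3\to2_30_2,\ 1_22_3\to2_31_2\}$; $B=\{\lhd0_3\to\lhd1_2,\ \lhd1_3\to\lhd0_20_2,\ \lhd2_3\to\lhd0_21_2\}$. (Intended reading: a string $\lhd d_1\cdots d_k\rhd$ represents the value obtained from $1$ by applying successively $d_1,\dots,d_k$, where $a_b$ acts as $x\mapsto bx+a$.) *)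

theory Defs
  imports Main
begin

text \<open>The alphabet {0_2, 1_2, 0_3, 1_3, 2_3, lhd, rhd}.\<close>
datatype sym = Z2 | O2 | Z3 | O3 | T3 | LB | RB

definition collatz :: "nat \<Rightarrow> nat" where
  "collatz n = (if even n then n div 2 else 3 * n + 1)"

type_synonym srs = "(sym list \<times> sym list) set"

definition rewrite_step :: "srs \<Rightarrow> sym list \<Rightarrow> sym list \<Rightarrow> bool" where
  "rewrite_step R s t \<longleftrightarrow>
     (\<exists>u v l r. (l, r) \<in> R \<and> s = u @ l @ v \<and> t = u @ r @ v)"

definition terminating :: "srs \<Rightarrow> bool" where
  "terminating R \<longleftrightarrow> \<not> (\<exists>f :: nat \<Rightarrow> sym list. \<forall>i. rewrite_step R (f i) (f (Suc i)))"

definition D_T :: srs where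
  "D_T = {([Z2, RB], [RB]), ([O2, RB], [T3, RB])}"

definition A_rules :: srs where
  "A_rules = {([Z2, Z3], [Z3, Z2]), ([Z2, O3], [Z3, O2]), ([Z2, T3], [O3, Z2]),
              ([O2, Z3], [O3, O2]), ([O2, O3], [T3, Z2]), ([O2, T3], [T3, O2])}"

definition B_rules :: srs where
  "B_rules = {([LB, Z3], [LB, O2]), ([LB, O3], [LB, Z2, Z2]), ([LB, T3], [LB, Z2, O2])}"

definition T_sys :: srs where
  "T_sys = D_T \<union> A_rules \<union> B_rules"

end

theory Submission
  imports Defs
begin

fun dig :: "sym \<Rightarrow> nat \<Rightarrow> nat" where
  "dig Z2 x = 2*x" | "dig O2 x = 2*x+1" | "dig Z3 x = 3*x" | "dig O3 x = 3*x+1"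
| "dig T3 x = 3*x+2" | "dig LB x = x" | "dig RB x = x"

definition sig :: "nat \<Rightarrow> nat" where "sig n = (LEAST k. (collatz ^^ k) n = 1)"

fun stp :: "nat option \<Rightarrow> sym \<Rightarrow> nat option" where
  "stp _ LB = Some 1" | "stp _ RB = None" | "stp (Some x) d = Some (dig d x)" | "stp None d = None"

fun isbin :: "sym \<Rightarrow> bool" where "isbin Z2 = True" | "isbin O2 = True" | "isbin _ = False"
fun ister :: "sym \<Rightarrow> bool" where "ister Z3 = True" | "ister O3 = True" | "ister T3 = True" | "ister _ = False"

fun cost :: "nat option \<Rightarrow> sym \<Rightarrow> nat" where
  "cost (Some x) RB = sig x" | "cost None d = (if isbin d then 1 else 0)" | "cost (Some x) d = 0"

fun pm :: "nat option \<Rightarrow> sym list \<Rightarrow> nat" where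
  "pm st [] = 0" | "pm st (d#ds) = cost st d + pm (stp st d) ds"

definition aft :: "nat option \<Rightarrow> sym list \<Rightarrow> nat option" where "aft st xs = foldl stp st xs"

lemma pm_append: "pm st (xs@ys) = pm st xs + pm (aft st xs) ys"
  by (induction xs arbitrary: st) (auto simp: aft_def)

lemma aft_append: "aft st (xs@ys) = aft (aft st xs) ys"
  by (simp add: aft_def)

definition good :: "nat option \<Rightarrow> bool" where "good st \<longleftrightarrow> (\<forall>x. st = Some x \<longrightarrow> x > 0)"

lemma good_stp: "good st \<Longrightarrow> good (stp st d)"
  by (cases st; cases d) (auto simp: good_def)

lemma good_aft: "good st \<Longrightarrow> good (aft st xs)"
  by (induction xs arbitrary: st) (auto simp: aft_def good_stp)

fun tc :: "sym list \<Rightarrow> nat" where "tc [] = 0" | "tc (d#ds) = (if ister d then 1 else 0) + tc ds"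
fun bc :: "sym list \<Rightarrow> nat" where "bc [] = 0" | "bc (d#ds) = (if isbin d then 1 else 0) + bc ds"
fun invs :: "sym list \<Rightarrow> nat" where "invs [] = 0" | "invs (d#ds) = (if isbin d then tc ds else 0) + invs ds"

lemma tc_append[simp]: "tc (xs@ys) = tc xs + tc ys" by (induction xs) auto
lemma bc_append[simp]: "bc (xs@ys) = bc xs + bc ys" by (induction xs) auto
lemma invs_append[simp]: "invs (xs@ys) = invs xs + bc xs * tc ys + invs ys"
  by (induction xs) (auto simp: algebra_simps)

definition Phi :: "sym list \<Rightarrow> nat" where "Phi s = invs s + (tc s)^2"

lemma sig_lt:
  assumes "\<exists>k. (collatz^^k) n = 1" "n \<noteq> 1"
  shows "sig (collatz n) < sig n"
proof -
  define k0 where "k0 = (LEAST k. (collatz ^^ k) n = 1)"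
  have k0: "(collatz ^^ k0) n = 1" unfolding k0_def using assms(1) by (rule LeastI_ex)
  have "k0 \<noteq> 0" using k0 assms(2) by (cases k0) auto
  then obtain j where j: "k0 = Suc j" by (cases k0) auto
  have "(collatz ^^ j) (collatz n) = 1" using k0 j by (simp add: funpow_Suc_right del: funpow.simps)
  then have "sig (collatz n) \<le> j" unfolding sig_def by (rule Least_le)
  then show ?thesis using j unfolding sig_def k0_def by simp
qed

lemma sig_even: assumes col: "\<forall>n>0. \<exists>k. (collatz^^k) n = 1" and x: "x > 0"
  shows "sig x < sig (2*x)"
proof -
  have c: "collatz (2*x) = x" by (simp add: collatz_def)
  have e: "\<exists>k. (collatz^^k) (2*x) = 1" using col x by simp
  have "2*x \<noteq> 1" by simp
  from sig_lt[OF e this] show ?thesis unfolding c .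
qed

lemma sig_odd: assumes col: "\<forall>n>0. \<exists>k. (collatz^^k) n = 1" and x: "x > 0"
  shows "sig (3*x+2) < sig (2*x+1)"
proof -
  have c1: "collatz (2*x+1) = 6*x+4" by (simp add: collatz_def)
  have c2: "collatz (6*x+4) = 3*x+2" by (simp add: collatz_def)
  have e1: "\<exists>k. (collatz^^k) (6*x+4) = 1" using col by simp
  have e2: "\<exists>k. (collatz^^k) (2*x+1) = 1" using col by simp
  have "6*x+4 \<noteq> (1::nat)" by simp
  from sig_lt[OF e1 this] have a1: "sig (3*x+2) < sig (6*x+4)" unfolding c2 .
  have "2*x+1 \<noteq> (1::nat)" using x by simp
  from sig_lt[OF e2 this] have a2: "sig (6*x+4) < sig (2*x+1)" unfolding c1 .
  from a1 a2 show ?thesis by simp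
qed

lemma rule_pm:
  assumes col: "\<forall>n>0. \<exists>k. (collatz^^k) n = 1" and lr: "(l,r) \<in> T_sys" and g: "good s"
  shows "aft s l = aft s r \<and> (if (l,r) \<in> D_T then pm s r < pm s l else pm s r = pm s l)"
proof (cases s)
  case None
  then show ?thesis using lr
    by (auto simp: T_sys_def D_T_def A_rules_def B_rules_def aft_def)
next
  case (Some x)
  then have x: "x > 0" using g by (simp add: good_def)
  show ?thesis using lr Some sig_even[OF col x] sig_odd[OF col x]
    by (auto simp: T_sys_def D_T_def A_rules_def B_rules_def aft_def)
qed

lemma A_facts: "(l,r) \<in> A_rules \<Longrightarrow> invs l = 1 \<and> invs r = 0 \<and> bc l = 1 \<and> bc r = 1 \<and> tc l = 1 \<and> tc r = 1"
  unfolding A_rules_def by auto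

lemma B_facts: "(l,r) \<in> B_rules \<Longrightarrow> invs l = 0 \<and> invs r = 0 \<and> bc l = 0 \<and> bc r \<le> 2 \<and> tc l = 1 \<and> tc r = 0"
  unfolding B_rules_def by auto

lemma Phi_split: "Phi (u@l@v) = invs u + bc u*(tc l + tc v) + invs l + bc l * tc v + invs v + (tc u + tc l + tc v)^2"
  by (simp add: Phi_def algebra_simps)

lemma rule_Phi:
  assumes "(l,r) \<in> A_rules \<union> B_rules"
  shows "Phi (u@r@v) < Phi (u@l@v)"
proof (cases "(l,r) \<in> A_rules")
  case True
  then show ?thesis using A_facts[OF True] by (simp add: Phi_split)
next
  case False
  then have B: "(l,r) \<in> B_rules" using assms by auto
  note f = B_facts[OF B]
  define a where "a = tc u" define c where "c = tc v" define p where "p = bc u"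
  have h1: "bc r * c \<le> 2 * c" using f by (intro mult_le_mono1) simp
  have h2: "(a + 1 + c)^2 = (a+c)^2 + 2*a + 2*c + 1" by (simp add: power2_eq_square algebra_simps)
  have h3: "p*(1+c) = p + p*c" by (simp add: algebra_simps)
  have "p * c + bc r * c + (a + c)^2 < p * (1 + c) + (a + 1 + c)^2"
    unfolding h2 h3 using h1 by linarith
  then show ?thesis using f by (simp add: Phi_split a_def c_def p_def add.assoc)
qed

lemma dir2:
  assumes col: "\<forall>n>0. \<exists>k. (collatz^^k) n = 1"
  shows "terminating T_sys"
proof -
  let ?R = "inv_image (less_than <*lex*> less_than) (\<lambda>s. (pm None s, Phi s))"
  have wf: "wf ?R" by (simp add: wf_lex_prod)
  have step: "(t,s) \<in> ?R" if "rewrite_step T_sys s t" for s t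
  proof -
    from that obtain u v l r where lr: "(l,r)\<in>T_sys" and s: "s = u@l@v" and t: "t = u@r@v"
      unfolding rewrite_step_def by blast
    have g: "good (aft None u)" by (rule good_aft) (simp add: good_def)
    note rp = rule_pm[OF col lr g]
    have ps: "pm None s = pm None u + pm (aft None u) l + pm (aft (aft None u) l) v"
      using s by (simp add: pm_append aft_append)
    have pt: "pm None t = pm None u + pm (aft None u) r + pm (aft (aft None u) r) v"
      using t by (simp add: pm_append aft_append)
    show ?thesis
    proof (cases "(l,r) \<in> D_T")
      case True
      then show ?thesis using rp ps pt by simp
    next
      case False
      then have "(l,r) \<in> A_rules \<union> B_rules" using lr by (auto simp: T_sys_def)
      then have "Phi t < Phi s" using rule_Phi s t by simp
      then show ?thesis using False rp ps pt by simp
    qed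
  qed
  show ?thesis unfolding terminating_def
  proof
    assume "\<exists>f. \<forall>i. rewrite_step T_sys (f i) (f (Suc i))"
    then obtain f where "\<forall>i. rewrite_step T_sys (f i) (f (Suc i))" by blast
    then have "\<forall>i. (f (Suc i), f i) \<in> ?R" using step by blast
    then show False using wf unfolding wf_iff_no_infinite_down_chain by blast
  qed
qed

definition ev :: "nat \<Rightarrow> sym list \<Rightarrow> nat" where "ev x w = foldl (\<lambda>a d. dig d a) x w"

lemma ev_simps[simp]: "ev x [] = x" "ev x (d#w) = ev (dig d x) w" "ev x (w@w') = ev (ev x w) w'"
  by (simp_all add: ev_def)

lemma dig_ge: "dig d x \<ge> x" by (cases d) auto

lemma ev_ge: "ev x w \<ge> x"
  by (induction w arbitrary: x) (auto intro: order_trans[OF dig_ge])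

lemma T_step: "(l,r) \<in> T_sys \<Longrightarrow> rewrite_step T_sys (u@l@v) (u@r@v)"
  unfolding rewrite_step_def by blast

lemma A_swap: "isbin b \<Longrightarrow> ister t \<Longrightarrow> \<exists>t' b'. ([b,t],[t',b']) \<in> T_sys \<and> ister t' \<and> isbin b' \<and> (\<forall>x. dig t (dig b x) = dig b' (dig t' x))"
  apply (cases b; cases t; simp)
       apply (rule exI[of _ Z3], rule exI[of _ Z2], simp add: T_sys_def A_rules_def)
      apply (rule exI[of _ Z3], rule exI[of _ O2], simp add: T_sys_def A_rules_def)
     apply (rule exI[of _ O3], rule exI[of _ Z2], simp add: T_sys_def A_rules_def)
    apply (rule exI[of _ O3], rule exI[of _ O2], simp add: T_sys_def A_rules_def)
   apply (rule exI[of _ T3], rule exI[of _ Z2], simp add: T_sys_def A_rules_def)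
  apply (rule exI[of _ T3], rule exI[of _ O2], simp add: T_sys_def A_rules_def)
  done

lemma B_conv: "ister t \<Longrightarrow> \<exists>bb. ([LB,t], LB#bb) \<in> T_sys \<and> (\<forall>d\<in>set bb. isbin d) \<and> ev 1 bb = dig t 1"
  apply (cases t; simp)
    apply (rule exI[of _ "[O2]"], simp add: T_sys_def B_rules_def)
   apply (rule exI[of _ "[Z2,Z2]"], simp add: T_sys_def B_rules_def)
  apply (rule exI[of _ "[Z2,O2]"], simp add: T_sys_def B_rules_def)
  done

lemma move: "(\<forall>d\<in>set bs. isbin d) \<Longrightarrow> ister t \<Longrightarrow> \<exists>t' bs'. ister t' \<and> (\<forall>d\<in>set bs'. isbin d)
   \<and> (\<forall>x. ev x (bs@[t]) = ev x (t'#bs')) \<and> (rewrite_step T_sys)\<^sup>*\<^sup>* (u@bs@[t]@v) (u@t'#bs'@v)"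
proof (induction bs arbitrary: t v rule: rev_induct)
  case Nil
  then show ?case by (intro exI[of _ t] exI[of _ "[]"]) auto
next
  case (snoc b cs)
  obtain t'' b' where sw: "([b,t],[t'',b']) \<in> T_sys" "ister t''" "isbin b'" "\<forall>x. dig t (dig b x) = dig b' (dig t'' x)"
    using A_swap snoc.prems by fastforce
  have st1: "rewrite_step T_sys (u@(cs@[b])@[t]@v) (u@cs@[t'']@(b'#v))"
    using T_step[OF sw(1), of "u@cs" v] by simp
  obtain t' bs'' where ih: "ister t'" "\<forall>d\<in>set bs''. isbin d" "\<forall>x. ev x (cs@[t'']) = ev x (t'#bs'')"
     "(rewrite_step T_sys)\<^sup>*\<^sup>* (u@cs@[t'']@(b'#v)) (u@t'#bs''@(b'#v))"
    using snoc.IH[of t'' "b'#v"] snoc.prems sw(2) by auto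
  have "ev x ((cs@[b])@[t]) = ev x (t'#bs''@[b'])" for x
  proof -
    have "ev x ((cs@[b])@[t]) = dig b' (dig t'' (ev x cs))" using sw(4) by simp
    also have "\<dots> = ev x (cs@[t''] @ [b'])" by simp
    also have "\<dots> = ev (ev x (cs@[t''])) [b']" by (simp del: ev_simps(2) add: ev_def)
    also have "\<dots> = ev x (t'#bs''@[b'])" using ih(3) by simp
    finally show ?thesis .
  qed
  moreover have "(rewrite_step T_sys)\<^sup>*\<^sup>* (u@(cs@[b])@[t]@v) (u@t'#(bs''@[b'])@v)"
    using st1 ih(4) by simp
  ultimately show ?case using ih(1,2) sw(3) by (intro exI[of _ t'] exI[of _ "bs''@[b']"]) auto
qed

lemma round:
  assumes bin: "\<forall>d\<in>set w. isbin d" and m1: "ev 1 w \<noteq> 1"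
  shows "\<exists>w'. (\<forall>d\<in>set w'. isbin d) \<and> (rewrite_step T_sys)\<^sup>+\<^sup>+ (LB#w@[RB]) (LB#w'@[RB])
     \<and> (ev 1 w' = collatz (ev 1 w) \<or> ev 1 w' = collatz (collatz (ev 1 w)))"
proof -
  have "w \<noteq> []" using m1 by auto
  then obtain bs d where w: "w = bs@[d]" by (cases w rule: rev_cases) auto
  have bbs: "\<forall>d\<in>set bs. isbin d" and bd: "isbin d" using bin w by auto
  define y where "y = ev 1 bs"
  have y: "y \<ge> 1" unfolding y_def using ev_ge[of 1 bs] by simp
  show ?thesis
  proof (cases d)
    case Z2
    have "([Z2,RB],[RB]) \<in> T_sys" by (simp add: T_sys_def D_T_def)
    from T_step[OF this, of "LB#bs" "[]"] have "rewrite_step T_sys (LB#w@[RB]) (LB#bs@[RB])"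
      using w Z2 by simp
    moreover have "ev 1 bs = collatz (ev 1 w)" using w Z2 by (simp add: collatz_def)
    ultimately show ?thesis using bbs by blast
  next
    case O2
    have "([O2,RB],[T3,RB]) \<in> T_sys" by (simp add: T_sys_def D_T_def)
    from T_step[OF this, of "LB#bs" "[]"] have s1: "rewrite_step T_sys (LB#w@[RB]) (LB#bs@[T3]@[RB])"
      using w O2 by simp
    obtain t' bs' where mv: "ister t'" "\<forall>d\<in>set bs'. isbin d" "\<forall>x. ev x (bs@[T3]) = ev x (t'#bs')"
      "(rewrite_step T_sys)\<^sup>*\<^sup>* ([LB]@bs@[T3]@[RB]) ([LB]@t'#bs'@[RB])"
      using move[OF bbs, of T3 "[LB]" "[RB]"] by auto
    obtain bb where bc: "([LB,t'], LB#bb) \<in> T_sys" "\<forall>d\<in>set bb. isbin d" "ev 1 bb = dig t' 1"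
      using B_conv[OF mv(1)] by blast
    from T_step[OF bc(1), of "[]" "bs'@[RB]"] have s3: "rewrite_step T_sys (LB#t'#bs'@[RB]) (LB#(bb@bs')@[RB])"
      by simp
    have "(rewrite_step T_sys)\<^sup>+\<^sup>+ (LB#w@[RB]) (LB#(bb@bs')@[RB])"
      using s1 mv(4) s3 by (simp add: rtranclp_into_tranclp2 tranclp_into_rtranclp rtranclp_into_tranclp1)
    moreover have "ev 1 (bb@bs') = ev 1 (bs@[T3])" using bc(3) mv(3) by simp
    moreover have "ev 1 (bs@[T3]) = collatz (collatz (ev 1 w))"
      using w O2 by (simp add: collatz_def y_def[symmetric])
    moreover have "\<forall>d\<in>set (bb@bs'). isbin d" using bc(2) mv(2) by auto
    ultimately show ?thesis by metis
  qed (use bd in auto)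
qed

lemma exists_bin: "n > 0 \<Longrightarrow> \<exists>w. (\<forall>d\<in>set w. isbin d) \<and> ev 1 w = n"
proof (induction n rule: less_induct)
  case (less n)
  show ?case
  proof (cases "n = 1")
    case True
    then show ?thesis by (intro exI[of _ "[]"]) simp
  next
    case False
    then have "n div 2 > 0" "n div 2 < n" using less.prems by auto
    then obtain w where w: "\<forall>d\<in>set w. isbin d" "ev 1 w = n div 2" using less.IH by blast
    show ?thesis
    proof (cases "even n")
      case True
      then show ?thesis using w by (intro exI[of _ "w@[Z2]"]) auto
    next
      case False
      then show ?thesis using w by (intro exI[of _ "w@[O2]"]) auto
    qed
  qed
qed

lemma tranclp_conv: "r\<^sup>+\<^sup>+ s t \<Longrightarrow> (t,s) \<in> {(t,s). r s t}\<^sup>+"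
proof (induction rule: tranclp_induct)
  case (base y)
  then show ?case by auto
next
  case (step y z)
  then show ?case by (meson CollectI case_prodI trancl_into_trancl2)
qed

lemma dir1:
  assumes trm: "terminating T_sys"
  shows "\<forall>n::nat. n > 0 \<longrightarrow> (\<exists>k. (collatz ^^ k) n = 1)"
proof (rule ccontr)
  assume "\<not> ?thesis"
  then obtain n where n: "n > 0" "\<forall>k. (collatz ^^ k) n \<noteq> 1" by blast
  let ?W = "{(t,s). rewrite_step T_sys s t}"
  have wf: "wf ?W" using trm unfolding terminating_def wf_iff_no_infinite_down_chain by auto
  then have wf2: "wf (?W\<^sup>+)" by (rule wf_trancl)
  define S where "S = {LB#w@[RB] | w. (\<forall>d\<in>set w. isbin d) \<and> (\<forall>k. (collatz^^k) (ev 1 w) \<noteq> 1)}"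
  obtain w0 where "\<forall>d\<in>set w0. isbin d" "ev 1 w0 = n" using exists_bin n(1) by blast
  then have "LB#w0@[RB] \<in> S" unfolding S_def using n(2) by auto
  then obtain z where z: "z \<in> S" and zmin: "\<forall>y. (y,z) \<in> ?W\<^sup>+ \<longrightarrow> y \<notin> S"
    using wf2 unfolding wf_eq_minimal by meson
  from z obtain w where zw: "z = LB#w@[RB]" and wb: "\<forall>d\<in>set w. isbin d"
     and wn: "\<forall>k. (collatz^^k) (ev 1 w) \<noteq> 1" unfolding S_def by blast
  have "ev 1 w \<noteq> 1" using wn[rule_format, of 0] by simp
  from round[OF wb this] obtain w' where w': "\<forall>d\<in>set w'. isbin d"
    "(rewrite_step T_sys)\<^sup>+\<^sup>+ (LB#w@[RB]) (LB#w'@[RB])"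
    "ev 1 w' = collatz (ev 1 w) \<or> ev 1 w' = collatz (collatz (ev 1 w))" by blast
  have "\<forall>k. (collatz^^k) (ev 1 w') \<noteq> 1"
  proof
    fix k
    have a: "(collatz^^j) (collatz m) = (collatz^^(Suc j)) m" for m j
      by (simp add: funpow_Suc_right del: funpow.simps)
    show "(collatz^^k) (ev 1 w') \<noteq> 1"
      using w'(3)
    proof
      assume e: "ev 1 w' = collatz (ev 1 w)"
      show ?thesis unfolding e a by (rule wn[rule_format])
    next
      assume e: "ev 1 w' = collatz (collatz (ev 1 w))"
      show ?thesis unfolding e using wn[rule_format, of "Suc (Suc k)"] by (simp only: a simp_thms)
    qed
  qed
  then have "LB#w'@[RB] \<in> S" unfolding S_def using w'(1) by blast
  moreover have "(LB#w'@[RB], z) \<in> ?W\<^sup>+" using tranclp_conv[OF w'(2)] zw by simp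
  ultimately show False using zmin by blast
qed

theorem mainTheorem6:
  shows "terminating T_sys \<longleftrightarrow> (\<forall>n::nat. n > 0 \<longrightarrow> (\<exists>k. (collatz ^^ k) n = 1))"
  using dir1 dir2 by blast

end
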